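(* Let $a:\mathbb{R}\to\mathbb{R}$ be Lipschitz continuous and let $k(x,y):=\frac1y\exp\big(i\frac{a(x)-a(x-y)}{y}\big)$ for $x\in\mathbb{R}$, $y\in\mathbb{R}\setminus\{0\}$. Then for all $x_0\in\mathbb{R}$ and $y\in\mathbb{R}\setminus\{0\}$, \[ \int_{\{|x|>2|y|\}}|k(x+x_0,x-y)-k(x+x_0,x)|\,dx\le 8(1+\|a'\|_\infty). \]
   Context: $\|a'\|_\infty$ denotes the essential supremum of the a.e. derivative of the Lipschitz function $a$ (its Lipschitz constant). *)

theory Defs
  imports "HOL-Analysis.Analysis"
begin

definition kern :: "(real \<Rightarrow> real) \<Rightarrow> real \<Rightarrow> real \<Rightarrow> complex" where
  "kern a x y = (1 / complex_of_real y) * exp (\<i> * complex_of_real ((a x - a (x - y)) / y))"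

text \<open>The Lipschitz constant of a (which equals the sup norm of its a.e. derivative).\<close>
definition lip_const :: "(real \<Rightarrow> real) \<Rightarrow> real" where
  "lip_const a = Inf {L. L-lipschitz_on UNIV a}"

end

theory Submission
  imports Defs "HOL-Probability.Characteristic_Functions"
begin

lemma iexp_diff_le: "cmod (exp (\<i> * complex_of_real r) - exp (\<i> * complex_of_real s)) \<le> \<bar>r - s\<bar>"
proof -
  have "exp (\<i> * complex_of_real r) - exp (\<i> * complex_of_real s)
      = exp (\<i> * complex_of_real s) * (exp (\<i> * complex_of_real (r - s)) - 1)"
    by (simp add: algebra_simps flip: exp_add)
  hence "cmod (exp (\<i> * complex_of_real r) - exp (\<i> * complex_of_real s))
      = cmod (exp (\<i> * complex_of_real (r - s)) - 1)"
    by (simp add: norm_mult)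
  also have "\<dots> \<le> \<bar>r - s\<bar>"
    using iexp_approx1[of "r - s" 0] by simp
  finally show ?thesis .
qed

lemma lip_const_lip:
  assumes "\<exists>L. L-lipschitz_on UNIV a"
  shows "(lip_const a)-lipschitz_on UNIV a"
proof -
  let ?S = "{L. L-lipschitz_on UNIV a}"
  have ne: "?S \<noteq> {}" using assms by auto
  have nn: "0 \<le> lip_const a"
    unfolding lip_const_def
    by (rule cInf_greatest[OF ne]) (auto simp: lipschitz_on_def)
  show ?thesis
    unfolding lipschitz_on_def
  proof (intro conjI nn ballI)
    fix x y :: real
    show "dist (a x) (a y) \<le> lip_const a * dist x y"
    proof (cases "x = y")
      case True then show ?thesis by simp
    next
      case False
      hence d: "dist x y > 0" by simp
      have "dist (a x) (a y) / dist x y \<le> lip_const a"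
        unfolding lip_const_def
      proof (rule cInf_greatest[OF ne])
        fix L assume "L \<in> ?S"
        hence "dist (a x) (a y) \<le> L * dist x y" by (auto simp: lipschitz_on_def)
        thus "dist (a x) (a y) / dist x y \<le> L" using d by (simp add: divide_le_eq)
      qed
      thus ?thesis using d by (simp add: divide_le_eq)
    qed
  qed
qed

lemma pointwise:
  fixes a :: "real \<Rightarrow> real"
  assumes lip: "L-lipschitz_on UNIV a" and y: "y \<noteq> 0" and x: "\<bar>x\<bar> > 2 * \<bar>y\<bar>"
  shows "cmod (kern a X (x - y) - kern a X x) \<le> 2 * (1 + L) * \<bar>y\<bar> / x\<^sup>2"
proof -
  have L0: "L \<ge> 0" using lip by (simp add: lipschitz_on_def)
  have la: "\<bar>a u - a v\<bar> \<le> L * \<bar>u - v\<bar>" for u v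
    using lip by (auto simp: lipschitz_on_def dist_real_def)
  define t where "t = x - y"
  have x0: "x \<noteq> 0" using x y by auto
  have tx: "\<bar>t\<bar> \<ge> \<bar>x\<bar> / 2" using x unfolding t_def by linarith
  have t0: "t \<noteq> 0" using tx x0 by auto
  define p1 where "p1 = (a X - a (X - t)) / t"
  define p2 where "p2 = (a X - a (X - x)) / x"
  define e1 where "e1 = exp (\<i> * complex_of_real p1)"
  define e2 where "e2 = exp (\<i> * complex_of_real p2)"
  have ne1: "cmod e1 = 1" unfolding e1_def by simp
  have k1: "kern a X t = complex_of_real (1 / t) * e1"
    unfolding kern_def e1_def p1_def by simp
  have k2: "kern a X x = complex_of_real (1 / x) * e2"
    unfolding kern_def e2_def p2_def by simp
  have "kern a X t - kern a X x = complex_of_real (1/t - 1/x) * e1 + complex_of_real (1/x) * (e1 - e2)"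
    unfolding k1 k2 by (simp add: algebra_simps diff_divide_distrib)
  hence "cmod (kern a X t - kern a X x) \<le> \<bar>1/t - 1/x\<bar> * cmod e1 + \<bar>1/x\<bar> * cmod (e1 - e2)"
    by (metis norm_triangle_ineq norm_mult norm_of_real)
  also have "\<dots> \<le> \<bar>1/t - 1/x\<bar> + \<bar>1/x\<bar> * \<bar>p1 - p2\<bar>"
    using ne1 iexp_diff_le[of p1 p2] unfolding e1_def e2_def
    by (simp add: divide_right_mono)
  finally have main: "cmod (kern a X t - kern a X x) \<le> \<bar>1/t - 1/x\<bar> + \<bar>1/x\<bar> * \<bar>p1 - p2\<bar>" .
  have d1: "\<bar>1/t - 1/x\<bar> = \<bar>y\<bar> / (\<bar>t\<bar> * \<bar>x\<bar>)"
  proof -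
    have "1/t - 1/x = y / (t * x)" using t0 x0 unfolding t_def by (simp add: field_simps)
    thus ?thesis by (simp add: abs_mult)
  qed
  have d1': "\<bar>1/t - 1/x\<bar> \<le> 2 * \<bar>y\<bar> / x\<^sup>2"
  proof -
    have "\<bar>x\<bar> * \<bar>x\<bar> / 2 \<le> \<bar>t\<bar> * \<bar>x\<bar>" 
      using mult_right_mono[OF tx, of "\<bar>x\<bar>"] by (simp add: mult.commute)
    hence "\<bar>y\<bar> / (\<bar>t\<bar> * \<bar>x\<bar>) \<le> \<bar>y\<bar> / (\<bar>x\<bar> * \<bar>x\<bar> / 2)"
    proof (rule divide_left_mono)
      have "0 < \<bar>t\<bar> * \<bar>x\<bar>" "0 < \<bar>x\<bar> * \<bar>x\<bar> / 2" using x0 t0 by (auto simp: zero_less_mult_iff)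
      thus "0 < \<bar>t\<bar> * \<bar>x\<bar> * (\<bar>x\<bar> * \<bar>x\<bar> / 2)" by (rule mult_pos_pos)
    qed auto
    also have "\<dots> = 2 * \<bar>y\<bar> / x\<^sup>2" by (simp add: power2_eq_square abs_mult_self)
    finally show ?thesis using d1 by simp
  qed
  have "p1 - p2 = (a X - a (X - t)) * (1/t - 1/x) + (a (X - x) - a (X - t)) / x"
  proof -
    have g: "A/t' - B/x' = A*(1/t'-1/x') + (A-B)/x'" for A B t' x' :: real
      by (simp add: algebra_simps diff_divide_distrib)
    show ?thesis unfolding p1_def p2_def by (subst g) simp
  qed
  hence "\<bar>p1 - p2\<bar> \<le> \<bar>a X - a (X - t)\<bar> * \<bar>1/t - 1/x\<bar> + \<bar>a (X - x) - a (X - t)\<bar> / \<bar>x\<bar>"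
    by (metis abs_triangle_ineq abs_mult abs_divide)
  also have "\<dots> \<le> (L * \<bar>t\<bar>) * (\<bar>y\<bar> / (\<bar>t\<bar> * \<bar>x\<bar>)) + (L * \<bar>y\<bar>) / \<bar>x\<bar>"
  proof -
    have h1: "\<bar>a X - a (X - t)\<bar> \<le> L * \<bar>t\<bar>" using la[of X "X - t"] by simp
    have h2: "\<bar>a (X - x) - a (X - t)\<bar> \<le> L * \<bar>y\<bar>" using la[of "X - x" "X - t"] unfolding t_def by simp
    have "\<bar>a X - a (X - t)\<bar> * \<bar>1/t - 1/x\<bar> \<le> (L * \<bar>t\<bar>) * (\<bar>y\<bar> / (\<bar>t\<bar> * \<bar>x\<bar>))"
      unfolding d1 by (rule mult_right_mono[OF h1]) simp
    moreover have "\<bar>a (X - x) - a (X - t)\<bar> / \<bar>x\<bar> \<le> (L * \<bar>y\<bar>) / \<bar>x\<bar>"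
      by (rule divide_right_mono[OF h2]) simp
    ultimately show ?thesis by linarith
  qed
  also have "\<dots> = 2 * L * \<bar>y\<bar> / \<bar>x\<bar>" using t0 by (simp add: field_simps)
  finally have pp: "\<bar>p1 - p2\<bar> \<le> 2 * L * \<bar>y\<bar> / \<bar>x\<bar>" .
  have "\<bar>1/x\<bar> * \<bar>p1 - p2\<bar> \<le> \<bar>1/x\<bar> * (2 * L * \<bar>y\<bar> / \<bar>x\<bar>)"
    by (intro mult_left_mono pp) auto
  also have "\<dots> = 2 * L * \<bar>y\<bar> / x\<^sup>2" by (simp add: power2_eq_square abs_mult_self)
  finally have "cmod (kern a X t - kern a X x) \<le> 2 * \<bar>y\<bar> / x\<^sup>2 + 2 * L * \<bar>y\<bar> / x\<^sup>2"
    using main d1' by linarith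
  also have "\<dots> = 2 * (1 + L) * \<bar>y\<bar> / x\<^sup>2" by (simp add: algebra_simps add_divide_distrib)
  finally show ?thesis unfolding t_def .
qed

lemma integral_tail:
  fixes K c :: real
  assumes c: "c > 0" and K: "K \<ge> 0"
  shows "((\<lambda>x. K / x\<^sup>2) has_integral (2 * K / c)) ({..-c} \<union> {c..})"
proof -
  define g where "g = (\<lambda>x::real. K / x\<^sup>2)"
  have "((\<lambda>x. x powr (-2)) has_integral -(c powr (-2+1)) / (-2+1)) {c..}"
    by (rule has_integral_powr_to_inf) (use c in auto)
  hence "((\<lambda>x. x powr (-2)) has_integral 1 / c) {c..}"
    using c by (simp add: powr_minus_divide)
  hence "((\<lambda>x. K * x powr (-2)) has_integral K * (1 / c)) {c..}"
    by (rule has_integral_mult_right)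
  moreover have eq: "K * x powr (-2) = g x" if "x \<in> {c..}" for x
  proof -
    have "x > 0" using c that by auto
    thus ?thesis unfolding g_def
      by (simp add: powr_minus_divide divide_inverse powr_realpow flip: power_inverse)
  qed
  ultimately have B: "(g has_integral K / c) {c..}"
    using has_integral_cong[of "{c..}" "\<lambda>x. K * x powr (-2)" g] by simp
  have gn: "0 \<le> g x" for x unfolding g_def using K by simp
  have absB: "g absolutely_integrable_on {c..} \<and> integral {c..} g = K / c"
    using B gn by (auto intro: nonnegative_absolutely_integrable_1 has_integral_integrable)
  have "(\<lambda>x. g (- x)) absolutely_integrable_on {..-c} \<and> integral {..-c} (\<lambda>x. g (- x)) = K / c"
    by (subst has_absolute_integral_reflect_real) (use absB in auto)
  moreover have "(\<lambda>x. g (- x)) = g" unfolding g_def by simp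
  ultimately have A: "(g has_integral K / c) {..-c}"
    using set_lebesgue_integral_eq_integral(1) by (metis has_integral_integral)
  have "(g has_integral (K / c + K / c)) ({..-c} \<union> {c..})"
  proof (rule has_integral_Un[OF A B])
    have "{..-c} \<inter> {c..} = ({}::real set)" using c by auto
    thus "negligible ({..-c} \<inter> {c..})" by simp
  qed
  thus ?thesis unfolding g_def by (simp add: field_simps)
qed

theorem lemma2p1:
  fixes a :: "real \<Rightarrow> real" and x0 y :: real
  assumes "\<exists>L. L-lipschitz_on UNIV a"
    and "y \<noteq> 0"
  shows "(\<integral>\<^sup>+ x \<in> {x. \<bar>x\<bar> > 2 * \<bar>y\<bar>}.
            ennreal (cmod (kern a (x + x0) (x - y) - kern a (x + x0) x)) \<partial>lborel)
         \<le> ennreal (8 * (1 + lip_const a))"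
proof -
  define L where "L = lip_const a"
  have lip: "L-lipschitz_on UNIV a" unfolding L_def by (rule lip_const_lip[OF assms(1)])
  have L0: "L \<ge> 0" using lip by (simp add: lipschitz_on_def)
  define c where "c = 2 * \<bar>y\<bar>"
  define K where "K = 2 * (1 + L) * \<bar>y\<bar>"
  have c: "c > 0" using assms(2) unfolding c_def by simp
  have K: "K \<ge> 0" using L0 unfolding K_def by simp
  define S where "S = {..-c} \<union> {c..}"
  have I: "((\<lambda>x. K / x\<^sup>2) has_integral (2 * K / c)) S"
    unfolding S_def by (rule integral_tail[OF c K])
  have N: "(\<integral>\<^sup>+ x. ennreal (indicator S x * (K / x\<^sup>2)) \<partial>lborel) = ennreal (2 * K / c)"
    by (rule nn_integral_has_integral_lebesgue[OF _ I]) (use K in simp)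
  have "(\<integral>\<^sup>+ x \<in> {x. \<bar>x\<bar> > 2 * \<bar>y\<bar>}.
            ennreal (cmod (kern a (x + x0) (x - y) - kern a (x + x0) x)) \<partial>lborel)
        \<le> (\<integral>\<^sup>+ x. ennreal (indicator S x * (K / x\<^sup>2)) \<partial>lborel)"
  proof (rule nn_integral_mono)
    fix x :: real
    show "ennreal (cmod (kern a (x + x0) (x - y) - kern a (x + x0) x)) * indicator {x. \<bar>x\<bar> > 2 * \<bar>y\<bar>} x
          \<le> ennreal (indicator S x * (K / x\<^sup>2))"
    proof (cases "\<bar>x\<bar> > 2 * \<bar>y\<bar>")
      case True
      hence "x \<in> S" unfolding S_def c_def by auto
      moreover have "cmod (kern a (x + x0) (x - y) - kern a (x + x0) x) \<le> K / x\<^sup>2"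
        using pointwise[OF lip assms(2) True] unfolding K_def .
      ultimately show ?thesis using True by (simp add: ennreal_leI)
    qed simp
  qed
  also have "\<dots> = ennreal (2 * K / c)" by (rule N)
  also have "\<dots> \<le> ennreal (8 * (1 + lip_const a))"
  proof (rule ennreal_leI)
    have "2 * K / c = 2 * (1 + L)" unfolding K_def c_def using assms(2) by simp
    thus "2 * K / c \<le> 8 * (1 + lip_const a)" using L0 unfolding L_def by simp
  qed
  finally show ?thesis .
qed

end
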